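(* Let $\Lambda$ be a row-finite $k$-graph with no sources, $S$ a semigroup, $\eta:\Lambda\to S$ a functor and $\Lambda\times_\eta S$ the associated skew product graph. If $\Lambda$ is aperiodic then $\Lambda\times_\eta S$ is aperiodic.
   Context: All semigroups are countable, cancellative, with identity. A $k$-graph is a countable category $\Lambda$ with a functor $d:\Lambda\to\mathbb{N}^k$ with unique factorisation; $\Lambda^n=d^{-1}(n)$, $\Lambda^0$ = vertices, $v\Lambda=\{\lambda:r(\lambda)=v\}$; row-finite: $v\Lambda^n$ finite; no sources: $v\Lambda^n\ne\emptyset$ for $n\ne0$. The skew product $\Lambda\times_\eta S$ has vertices $\Lambda^0\times S$, morphisms $\Lambda\times S$, $r(\lambda,t)=(r(\lambda),t)$, $s(\lambda,t)=(s(\lambda),t\eta(\lambda))$, $(\lambda,t)(\mu,t\eta(\lambda))=(\lambda\mu,t)$, $d(\lambda,t)=d(\lambda)$. $\lambda(m,n)$ is the unique path of degree $n-m$ with $\lambda=\lambda'\lambda(m,n)\lambda''$, $d(\lambda')=m$. A $k$-graph $\Gamma$ is aperiodic if for every $v\in\Gamma^0$ and all $m\neq n\in\mathbb{N}^k$ there is $\lambda\in v\Gamma$ with $d(\lambda)\ge m\vee n$ and $\lambda(m,m+d(\lambda)-(m\vee n))\ne\lambda(n,n+d(\lambda)-(m\vee n))$. *)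

theory Defs
  imports "HOL-Library.Function_Algebras" "HOL-Library.Countable_Set" "HOL-Algebra.Group"
begin

text \<open>A k-graph: a countable small category (objects = vertices, morphisms = paths)
  together with a degree functor into N^k, here represented as functions 'k => nat
  for a finite index type 'k (so k = CARD('k)).\<close>

record ('v, 'a, 'k) kgraph =
  kg_verts :: "'v set"
  kg_mors  :: "'a set"
  kg_r     :: "'a \<Rightarrow> 'v"
  kg_s     :: "'a \<Rightarrow> 'v"
  kg_comp  :: "'a \<Rightarrow> 'a \<Rightarrow> 'a"
  kg_id    :: "'v \<Rightarrow> 'a"
  kg_deg   :: "'a \<Rightarrow> ('k \<Rightarrow> nat)"

definition is_kgraph :: "('v, 'a, 'k::finite) kgraph \<Rightarrow> bool" where
  "is_kgraph G \<longleftrightarrow>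
     countable (kg_verts G) \<and> countable (kg_mors G) \<and>
     (\<forall>x\<in>kg_mors G. kg_r G x \<in> kg_verts G \<and> kg_s G x \<in> kg_verts G) \<and>
     (\<forall>v\<in>kg_verts G. kg_id G v \<in> kg_mors G \<and> kg_r G (kg_id G v) = v \<and> kg_s G (kg_id G v) = v) \<and>
     (\<forall>x\<in>kg_mors G. \<forall>y\<in>kg_mors G. kg_s G x = kg_r G y \<longrightarrow>
        kg_comp G x y \<in> kg_mors G \<and> kg_r G (kg_comp G x y) = kg_r G x \<and>
        kg_s G (kg_comp G x y) = kg_s G y) \<and>
     (\<forall>x\<in>kg_mors G. \<forall>y\<in>kg_mors G. \<forall>z\<in>kg_mors G.
        kg_s G x = kg_r G y \<and> kg_s G y = kg_r G z \<longrightarrow>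
        kg_comp G (kg_comp G x y) z = kg_comp G x (kg_comp G y z)) \<and>
     (\<forall>x\<in>kg_mors G. kg_comp G (kg_id G (kg_r G x)) x = x \<and>
        kg_comp G x (kg_id G (kg_s G x)) = x) \<and>
     (\<forall>v\<in>kg_verts G. kg_deg G (kg_id G v) = 0) \<and>
     (\<forall>x\<in>kg_mors G. \<forall>y\<in>kg_mors G. kg_s G x = kg_r G y \<longrightarrow>
        kg_deg G (kg_comp G x y) = kg_deg G x + kg_deg G y) \<and>
     \<comment> \<open>unique factorisation\<close>
     (\<forall>x\<in>kg_mors G. \<forall>m n. kg_deg G x = m + n \<longrightarrow>
        (\<exists>!p. fst p \<in> kg_mors G \<and> snd p \<in> kg_mors G \<and> kg_s G (fst p) = kg_r G (snd p) \<and>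
              kg_deg G (fst p) = m \<and> kg_deg G (snd p) = n \<and>
              kg_comp G (fst p) (snd p) = x))"

definition row_finite :: "('v, 'a, 'k::finite) kgraph \<Rightarrow> bool" where
  "row_finite G \<longleftrightarrow> (\<forall>v\<in>kg_verts G. \<forall>n.
      finite {x\<in>kg_mors G. kg_r G x = v \<and> kg_deg G x = n})"

definition no_sources :: "('v, 'a, 'k::finite) kgraph \<Rightarrow> bool" where
  "no_sources G \<longleftrightarrow> (\<forall>v\<in>kg_verts G. \<forall>n. n \<noteq> 0 \<longrightarrow>
      {x\<in>kg_mors G. kg_r G x = v \<and> kg_deg G x = n} \<noteq> {})"

definition seg :: "('v, 'a, 'k::finite) kgraph \<Rightarrow> 'a \<Rightarrow> ('k \<Rightarrow> nat) \<Rightarrow> ('k \<Rightarrow> nat) \<Rightarrow> 'a" where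
  "seg G x m n = (THE y. \<exists>x1 x2. x1 \<in> kg_mors G \<and> y \<in> kg_mors G \<and> x2 \<in> kg_mors G \<and>
      kg_s G x1 = kg_r G y \<and> kg_s G y = kg_r G x2 \<and>
      kg_deg G x1 = m \<and> kg_deg G y = n - m \<and>
      kg_comp G (kg_comp G x1 y) x2 = x)"

definition aperiodic :: "('v, 'a, 'k::finite) kgraph \<Rightarrow> bool" where
  "aperiodic G \<longleftrightarrow> (\<forall>v\<in>kg_verts G. \<forall>m n. m \<noteq> n \<longrightarrow>
     (\<exists>x\<in>kg_mors G. kg_r G x = v \<and> kg_deg G x \<ge> sup m n \<and>
        seg G x m (m + kg_deg G x - sup m n) \<noteq> seg G x n (n + kg_deg G x - sup m n)))"

text \<open>Standing convention: semigroups are countable, cancellative, with identity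
  (i.e. countable cancellative monoids).\<close>

definition cancel_semigroup :: "('s, 'b) monoid_scheme \<Rightarrow> bool" where
  "cancel_semigroup S \<longleftrightarrow> monoid S \<and> countable (carrier S) \<and>
     (\<forall>a\<in>carrier S. \<forall>b\<in>carrier S. \<forall>c\<in>carrier S.
        (a \<otimes>\<^bsub>S\<^esub> b = a \<otimes>\<^bsub>S\<^esub> c \<longrightarrow> b = c) \<and>
        (b \<otimes>\<^bsub>S\<^esub> a = c \<otimes>\<^bsub>S\<^esub> a \<longrightarrow> b = c))"

definition kg_functor :: "('v, 'a, 'k::finite) kgraph \<Rightarrow> ('s, 'b) monoid_scheme \<Rightarrow> ('a \<Rightarrow> 's) \<Rightarrow> bool" where
  "kg_functor G S \<eta> \<longleftrightarrow>
     (\<forall>x\<in>kg_mors G. \<eta> x \<in> carrier S) \<and>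
     (\<forall>v\<in>kg_verts G. \<eta> (kg_id G v) = \<one>\<^bsub>S\<^esub>) \<and>
     (\<forall>x\<in>kg_mors G. \<forall>y\<in>kg_mors G. kg_s G x = kg_r G y \<longrightarrow>
        \<eta> (kg_comp G x y) = \<eta> x \<otimes>\<^bsub>S\<^esub> \<eta> y)"

definition skew_product :: "('v, 'a, 'k::finite) kgraph \<Rightarrow> ('s, 'b) monoid_scheme \<Rightarrow> ('a \<Rightarrow> 's)
    \<Rightarrow> ('v \<times> 's, 'a \<times> 's, 'k) kgraph" where
  "skew_product G S \<eta> =
     \<lparr> kg_verts = kg_verts G \<times> carrier S,
       kg_mors = kg_mors G \<times> carrier S,
       kg_r = (\<lambda>(x, t). (kg_r G x, t)),
       kg_s = (\<lambda>(x, t). (kg_s G x, t \<otimes>\<^bsub>S\<^esub> \<eta> x)),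
       kg_comp = (\<lambda>(x, t) (y, u). (kg_comp G x y, t)),
       kg_id = (\<lambda>(v, t). (kg_id G v, t)),
       kg_deg = (\<lambda>(x, t). kg_deg G x) \<rparr>"

end

theory Submission imports Defs begin

lemma kg_facts:
  assumes "is_kgraph G"
  shows "\<And>x. x\<in>kg_mors G \<Longrightarrow> kg_r G x \<in> kg_verts G \<and> kg_s G x \<in> kg_verts G"
  and "\<And>x y. x\<in>kg_mors G \<Longrightarrow> y\<in>kg_mors G \<Longrightarrow> kg_s G x = kg_r G y \<Longrightarrow>
        kg_comp G x y \<in> kg_mors G \<and> kg_r G (kg_comp G x y) = kg_r G x \<and>
        kg_s G (kg_comp G x y) = kg_s G y"
  and "\<And>x y z. x\<in>kg_mors G \<Longrightarrow> y\<in>kg_mors G \<Longrightarrow> z\<in>kg_mors G \<Longrightarrow>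
        kg_s G x = kg_r G y \<Longrightarrow> kg_s G y = kg_r G z \<Longrightarrow>
        kg_comp G (kg_comp G x y) z = kg_comp G x (kg_comp G y z)"
  and "\<And>x y. x\<in>kg_mors G \<Longrightarrow> y\<in>kg_mors G \<Longrightarrow> kg_s G x = kg_r G y \<Longrightarrow>
        kg_deg G (kg_comp G x y) = kg_deg G x + kg_deg G y"
  and "\<And>x m n. x\<in>kg_mors G \<Longrightarrow> kg_deg G x = m + n \<Longrightarrow>
        (\<exists>!p. fst p \<in> kg_mors G \<and> snd p \<in> kg_mors G \<and> kg_s G (fst p) = kg_r G (snd p) \<and>
              kg_deg G (fst p) = m \<and> kg_deg G (snd p) = n \<and>
              kg_comp G (fst p) (snd p) = x)"
  using assms unfolding is_kgraph_def by blast+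

definition segP where
  "segP G x m n y \<longleftrightarrow> (\<exists>x1 x2. x1 \<in> kg_mors G \<and> y \<in> kg_mors G \<and> x2 \<in> kg_mors G \<and>
      kg_s G x1 = kg_r G y \<and> kg_s G y = kg_r G x2 \<and>
      kg_deg G x1 = m \<and> kg_deg G y = n - m \<and>
      kg_comp G (kg_comp G x1 y) x2 = x)"

lemma seg_eq: "seg G x m n = (THE y. segP G x m n y)"
  unfolding seg_def segP_def by simp

lemma fun_split: "(a::'k\<Rightarrow>nat) \<le> b \<Longrightarrow> b = a + (b - a)"
  by (simp add: le_fun_def fun_eq_iff)

lemma segP_unique:
  assumes G: "is_kgraph G" and x: "x \<in> kg_mors G" and ab: "a \<le> b" and bd: "b \<le> kg_deg G x"
  shows "\<exists>!y. segP G x a b y"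
proof -
  note F = kg_facts[OF G]
  have ad: "a \<le> kg_deg G x" using ab bd by (rule order_trans)
  obtain p where p: "fst p \<in> kg_mors G" "snd p \<in> kg_mors G" "kg_s G (fst p) = kg_r G (snd p)"
     "kg_deg G (fst p) = a" "kg_deg G (snd p) = kg_deg G x - a" "kg_comp G (fst p) (snd p) = x"
    using F(5)[OF x fun_split[OF ad]] by blast
  have "b - a \<le> kg_deg G (snd p)" using p(5) bd by (simp add: le_fun_def diff_le_mono)
  then obtain q where q: "fst q \<in> kg_mors G" "snd q \<in> kg_mors G" "kg_s G (fst q) = kg_r G (snd q)"
     "kg_deg G (fst q) = b - a" "kg_deg G (snd q) = kg_deg G (snd p) - (b - a)" "kg_comp G (fst q) (snd q) = snd p"
    using F(5)[OF p(2) fun_split] by blast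
  have ex: "segP G x a b (fst q)"
    unfolding segP_def
    apply (rule exI[of _ "fst p"], rule exI[of _ "snd q"])
    using p q F(2,3) by (metis)
  have un: "y = fst q" if "segP G x a b y" for y
  proof -
    from that obtain x1 x2 where h: "x1 \<in> kg_mors G" "y \<in> kg_mors G" "x2 \<in> kg_mors G"
      "kg_s G x1 = kg_r G y" "kg_s G y = kg_r G x2" "kg_deg G x1 = a" "kg_deg G y = b - a"
      "kg_comp G (kg_comp G x1 y) x2 = x" unfolding segP_def by blast
    have yx2: "kg_comp G y x2 \<in> kg_mors G" "kg_r G (kg_comp G y x2) = kg_r G y"
      using F(2)[OF h(2,3,5)] by auto
    have xe: "kg_comp G x1 (kg_comp G y x2) = x" using F(3)[OF h(1,2,3,4,5)] h(8) by simp
    have dx: "kg_deg G x = a + kg_deg G (kg_comp G y x2)"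
      using xe F(4)[OF h(1) yx2(1)] h(4) yx2(2) h(6) by simp
    have "(x1, kg_comp G y x2) = p"
      using F(5)[OF x dx] p h yx2 xe dx
      by (smt (verit) add_diff_cancel_left' fst_conv snd_conv)
    hence e1: "kg_comp G y x2 = snd p" by auto
    have dd: "kg_deg G (snd p) = (b - a) + kg_deg G x2"
      using e1 F(4)[OF h(2,3,5)] h(7) by simp
    have "(y, x2) = q"
      using F(5)[OF p(2) dd] q h e1 dd
      by (smt (verit) add_diff_cancel_left' fst_conv snd_conv)
    thus ?thesis by auto
  qed
  show ?thesis using ex un by blast
qed

lemma skew_segP_fst:
  assumes G: "is_kgraph G" and eta: "kg_functor G S \<eta>" and M: "monoid S"
    and x: "x \<in> kg_mors G" and t: "t \<in> carrier S" and ab: "a \<le> b" and bd: "b \<le> kg_deg G x"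
  shows "fst (seg (skew_product G S \<eta>) (x, t) a b) = seg G x a b"
proof -
  note F = kg_facts[OF G]
  have etac: "\<And>z. z \<in> kg_mors G \<Longrightarrow> \<eta> z \<in> carrier S" using eta unfolding kg_functor_def by blast
  let ?H = "skew_product G S \<eta>"
  obtain y0 where y0: "segP G x a b y0" and u0: "\<And>y. segP G x a b y \<Longrightarrow> y = y0"
    using segP_unique[OF G x ab bd] by blast
  have sg: "seg G x a b = y0" unfolding seg_eq using y0 u0 by blast
  have proj: "segP G x a b (fst Y) \<and> snd Y \<in> carrier S \<and> (\<exists>x1. x1 \<in> kg_mors G \<and> segP G x a b (fst Y) \<and> kg_s G x1 = kg_r G (fst Y) \<and> kg_deg G x1 = a \<and>
      (\<exists>x2. x2 \<in> kg_mors G \<and> kg_s G (fst Y) = kg_r G x2 \<and> kg_comp G (kg_comp G x1 (fst Y)) x2 = x) \<and> snd Y = t \<otimes>\<^bsub>S\<^esub> \<eta> x1)"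
    if "segP ?H (x,t) a b Y" for Y
  proof -
    from that obtain X1 X2 where h: "X1 \<in> kg_mors ?H" "Y \<in> kg_mors ?H" "X2 \<in> kg_mors ?H"
      "kg_s ?H X1 = kg_r ?H Y" "kg_s ?H Y = kg_r ?H X2" "kg_deg ?H X1 = a" "kg_deg ?H Y = b - a"
      "kg_comp ?H (kg_comp ?H X1 Y) X2 = (x,t)" unfolding segP_def by blast
    obtain x1 t1 where X1: "X1 = (x1,t1)" by force
    obtain y u where Y: "Y = (y,u)" by force
    obtain x2 t2 where X2: "X2 = (x2,t2)" by force
    have hh: "x1 \<in> kg_mors G" "y \<in> kg_mors G" "x2 \<in> kg_mors G" "t1 \<in> carrier S" "u \<in> carrier S"
      "kg_s G x1 = kg_r G y" "u = t1 \<otimes>\<^bsub>S\<^esub> \<eta> x1" "kg_s G y = kg_r G x2"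
      "kg_deg G x1 = a" "kg_deg G y = b - a" "kg_comp G (kg_comp G x1 y) x2 = x" "t1 = t"
      using h unfolding X1 Y X2 by (auto simp: skew_product_def)
    have "segP G x a b y" unfolding segP_def using hh by blast
    thus ?thesis using hh Y by auto
  qed
  obtain x1 x2 where q: "x1 \<in> kg_mors G" "y0 \<in> kg_mors G" "x2 \<in> kg_mors G"
      "kg_s G x1 = kg_r G y0" "kg_s G y0 = kg_r G x2" "kg_deg G x1 = a" "kg_deg G y0 = b - a"
      "kg_comp G (kg_comp G x1 y0) x2 = x" using y0 unfolding segP_def by blast
  define Y0 where "Y0 = (y0, t \<otimes>\<^bsub>S\<^esub> \<eta> x1)"
  have c1: "t \<otimes>\<^bsub>S\<^esub> \<eta> x1 \<in> carrier S" by (rule monoid.m_closed[OF M t etac[OF q(1)]])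
  have c2: "t \<otimes>\<^bsub>S\<^esub> \<eta> x1 \<otimes>\<^bsub>S\<^esub> \<eta> y0 \<in> carrier S" by (rule monoid.m_closed[OF M c1 etac[OF q(2)]])
  have exY: "segP ?H (x,t) a b Y0"
    unfolding segP_def Y0_def
    apply (rule exI[of _ "(x1,t)"], rule exI[of _ "(x2, t \<otimes>\<^bsub>S\<^esub> \<eta> x1 \<otimes>\<^bsub>S\<^esub> \<eta> y0)"])
    using q c1 c2 t by (simp add: skew_product_def)
  have unY: "Y = Y0" if "segP ?H (x,t) a b Y" for Y
  proof -
    have P1: "segP G x a b (fst Y)" using proj[OF that] by (rule conjunct1)
    obtain x1' where pq: "x1' \<in> kg_mors G" "kg_s G x1' = kg_r G (fst Y)" "kg_deg G x1' = a"
      "\<exists>x2. x2 \<in> kg_mors G \<and> kg_s G (fst Y) = kg_r G x2 \<and> kg_comp G (kg_comp G x1' (fst Y)) x2 = x"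
      "snd Y = t \<otimes>\<^bsub>S\<^esub> \<eta> x1'"
      using proj[OF \<open>segP ?H (x,t) a b Y\<close>] by blast
    obtain x2' where pr: "x2' \<in> kg_mors G" "kg_s G (fst Y) = kg_r G x2'" "kg_comp G (kg_comp G x1' (fst Y)) x2' = x"
      using pq(4) by blast
    note pp = P1 pq(1,2,3) pr pq(5)
    have fy: "fst Y = y0" using u0 pp(1) by blast
    have "fst Y \<in> kg_mors G" using fy q by simp
    have yx2: "kg_comp G y0 x2' \<in> kg_mors G" "kg_r G (kg_comp G y0 x2') = kg_r G y0"
      using F(2)[OF q(2) pp(5)] pp(6) fy by auto
    have xe: "kg_comp G x1' (kg_comp G y0 x2') = x" using F(3)[OF pp(2) q(2) pp(5)] pp(3,6,7) fy by simp
    have yx2b: "kg_comp G y0 x2 \<in> kg_mors G" "kg_r G (kg_comp G y0 x2) = kg_r G y0"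
      using F(2)[OF q(2) q(3) q(5)] by auto
    have xe2: "kg_comp G x1 (kg_comp G y0 x2) = x" using F(3)[OF q(1,2,3,4,5)] q(8) by simp
    have dx: "kg_deg G x = a + kg_deg G (kg_comp G y0 x2)"
      using xe2 F(4)[OF q(1) yx2b(1)] q(4) yx2b(2) q(6) by simp
    have dx': "kg_deg G x = a + kg_deg G (kg_comp G y0 x2')"
      using xe F(4)[OF pp(2) yx2(1)] pp(3) fy yx2(2) pp(4) by simp
    have "kg_deg G (kg_comp G y0 x2) = kg_deg G (kg_comp G y0 x2')" using dx dx' by simp
    hence "(x1', kg_comp G y0 x2') = (x1, kg_comp G y0 x2)"
      using F(5)[OF x dx] pp yx2 yx2b xe xe2 q fy by (smt (verit) fst_conv snd_conv)
    hence "x1' = x1" by simp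
    thus ?thesis using fy pp(8) unfolding Y0_def by (cases Y) auto
  qed
  have "seg ?H (x,t) a b = Y0" unfolding seg_eq using exY unY by blast
  thus ?thesis using sg Y0_def by simp
qed

theorem corollary3p5:
  fixes \<Lambda> :: "('v, 'a, 'k::finite) kgraph"
    and S :: "('s, 'b) monoid_scheme"
    and \<eta> :: "'a \<Rightarrow> 's"
  assumes "is_kgraph \<Lambda>" and "row_finite \<Lambda>" and "no_sources \<Lambda>"
    and "cancel_semigroup S"
    and "kg_functor \<Lambda> S \<eta>"
    and "aperiodic \<Lambda>"
  shows "aperiodic (skew_product \<Lambda> S \<eta>)"
proof -
  note G = assms(1)
  have M: "monoid S" using assms(4) unfolding cancel_semigroup_def by blast
  show ?thesis unfolding aperiodic_def
  proof (intro ballI allI impI)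
    fix V m n assume V: "V \<in> kg_verts (skew_product \<Lambda> S \<eta>)" and mn: "(m::'k\<Rightarrow>nat) \<noteq> n"
    obtain v t where Vv: "V = (v,t)" "v \<in> kg_verts \<Lambda>" "t \<in> carrier S"
      using V by (cases V) (auto simp: skew_product_def)
    obtain x where x: "x \<in> kg_mors \<Lambda>" "kg_r \<Lambda> x = v" "kg_deg \<Lambda> x \<ge> sup m n"
      "seg \<Lambda> x m (m + kg_deg \<Lambda> x - sup m n) \<noteq> seg \<Lambda> x n (n + kg_deg \<Lambda> x - sup m n)"
      using assms(6) Vv(2) mn unfolding aperiodic_def by blast
    have pt: "\<And>i. m i \<le> kg_deg \<Lambda> x i \<and> n i \<le> kg_deg \<Lambda> x i" using x(3) by (simp add: le_fun_def)
    have l1: "m \<le> m + kg_deg \<Lambda> x - sup m n" "m + kg_deg \<Lambda> x - sup m n \<le> kg_deg \<Lambda> x"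
      "n \<le> n + kg_deg \<Lambda> x - sup m n" "n + kg_deg \<Lambda> x - sup m n \<le> kg_deg \<Lambda> x"
      using pt by (auto simp: le_fun_def sup_nat_def max_def) (metis add_diff_assoc le_add1)+
    note e1 = skew_segP_fst[OF G assms(5) M x(1) Vv(3) l1(1,2)]
    note e2 = skew_segP_fst[OF G assms(5) M x(1) Vv(3) l1(3,4)]
    show "\<exists>X\<in>kg_mors (skew_product \<Lambda> S \<eta>). kg_r (skew_product \<Lambda> S \<eta>) X = V \<and>
       sup m n \<le> kg_deg (skew_product \<Lambda> S \<eta>) X \<and>
       seg (skew_product \<Lambda> S \<eta>) X m (m + kg_deg (skew_product \<Lambda> S \<eta>) X - sup m n) \<noteq>
       seg (skew_product \<Lambda> S \<eta>) X n (n + kg_deg (skew_product \<Lambda> S \<eta>) X - sup m n)"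
    proof (rule bexI[of _ "(x,t)"])
      show "(x,t) \<in> kg_mors (skew_product \<Lambda> S \<eta>)" using x Vv by (simp add: skew_product_def)
      have dg: "kg_deg (skew_product \<Lambda> S \<eta>) (x,t) = kg_deg \<Lambda> x" by (simp add: skew_product_def)
      show "kg_r (skew_product \<Lambda> S \<eta>) (x,t) = V \<and>
       sup m n \<le> kg_deg (skew_product \<Lambda> S \<eta>) (x,t) \<and>
       seg (skew_product \<Lambda> S \<eta>) (x,t) m (m + kg_deg (skew_product \<Lambda> S \<eta>) (x,t) - sup m n) \<noteq>
       seg (skew_product \<Lambda> S \<eta>) (x,t) n (n + kg_deg (skew_product \<Lambda> S \<eta>) (x,t) - sup m n)"
        unfolding dg using x Vv e1 e2 by (auto simp: skew_product_def)
    qed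
  qed
qed

end
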